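(* Let $c\ge1$ be an odd integer. Every $c$-indistinguishable finite bias distribution is also $(c+1)$-indistinguishable.
   Context: A finite bias distribution is a probability distribution $\mathcal{P}$ supported on a finite subset of $(0,1)$ that is symmetric: it outputs $a$ and $1-a$ with the same probability. $E_p$ is expectation over $p\sim\mathcal{P}$. $\sigma(p)=\sqrt{(1-p)/p}$; for integers $\ell\ge1$, $0\le x\le\ell$, $f_{\ell,x}(p)=p^x(1-p)^{\ell-x}(x\sigma(p)-(\ell-x)\sigma(1-p))$ and $R_{\ell,x}=\max\{0,E_p[f_{\ell,x}(p)]\}$. For a positive integer $c$, $\mathcal{P}$ is $c$-indistinguishable if $\sum_{x=1}^{\ell-1}\binom{\ell}{x}R_{\ell,x}=0$ for all $2\le\ell\le c$ (so every such distribution is $1$-indistinguishable). *)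

theory Defs
  imports "HOL-Probability.Probability"
begin

definition finite_bias_dist :: "real pmf \<Rightarrow> bool" where
  "finite_bias_dist P \<longleftrightarrow> finite (set_pmf P) \<and> set_pmf P \<subseteq> {0<..<1}
     \<and> (\<forall>a. pmf P a = pmf P (1 - a))"

definition sigma_b :: "real \<Rightarrow> real" where
  "sigma_b p = sqrt ((1 - p) / p)"

definition f_lx :: "nat \<Rightarrow> nat \<Rightarrow> real \<Rightarrow> real" where
  "f_lx l x p = p ^ x * (1 - p) ^ (l - x)
     * (real x * sigma_b p - real (l - x) * sigma_b (1 - p))"

definition R_lx :: "real pmf \<Rightarrow> nat \<Rightarrow> nat \<Rightarrow> real" where
  "R_lx P l x = max 0 (measure_pmf.expectation P (f_lx l x))"

definition indistinguishable :: "nat \<Rightarrow> real pmf \<Rightarrow> bool" where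
  "indistinguishable c P \<longleftrightarrow>
     (\<forall>l. 2 \<le> l \<and> l \<le> c \<longrightarrow> (\<Sum>x=1..l-1. real (l choose x) * R_lx P l x) = 0)"

end

theory Submission
  imports Defs
begin

lemma K: assumes p: "0 < p" "p < (1::real)"
  shows "p * sigma_b p = (1 - p) * sigma_b (1 - p)"
proof -
  have a: "sqrt p * sqrt p = p" "sqrt (1-p) * sqrt (1-p) = 1 - p" using p by simp_all
  have b: "sqrt p > 0" "sqrt (1-p) > 0" using p by simp_all
  have "p * sqrt ((1-p)/p) = sqrt p * sqrt (1-p)"
    using p b by (simp add: real_sqrt_divide field_simps a)
  moreover have "(1-p) * sqrt (p/(1-p)) = sqrt p * sqrt (1-p)"
    using p b by (simp add: real_sqrt_divide field_simps a)
  ultimately show ?thesis unfolding sigma_b_def by simp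
qed
lemma f_rec:
  assumes p: "0 < p" "p < 1" and x: "x \<le> l"
  shows "f_lx l x p = f_lx (l+1) x p + f_lx (l+1) (x+1) p"
proof -
  define s where "s = sigma_b p"
  define t where "t = sigma_b (1 - p)"
  have K: "p * s = (1 - p) * t"
    unfolding s_def t_def using K[OF p] .
  have e1: "(1-p)^(l+1-x) = (1-p) * (1-p)^(l-x)" using x
    by (simp add: Suc_diff_le)
  have e2: "real (l + 1 - x) = real (l - x) + 1" using x by simp
  have e3: "l + 1 - (x + 1) = l - x" by simp
  have "f_lx (l+1) x p + f_lx (l+1) (x+1) p = p^x * (1-p)^(l-x) *
     ((1-p) * (real x * s - (real (l-x) + 1) * t) + p * ((real x + 1) * s - real (l-x) * t))"
    unfolding f_lx_def s_def[symmetric] t_def[symmetric] e1 e2 e3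
    by (simp add: algebra_simps)
  also have "(1-p) * (real x * s - (real (l-x) + 1) * t) + p * ((real x + 1) * s - real (l-x) * t)
     = real x * s - real (l-x) * t + (p * s - (1-p) * t)"
    by (simp add: algebra_simps)
  also have "\<dots> = real x * s - real (l-x) * t" using K by simp
  finally show ?thesis unfolding f_lx_def s_def t_def by simp
qed

lemma f_sym:
  assumes x: "x \<le> l"
  shows "f_lx l x (1 - p) = - f_lx l (l - x) p"
  using x unfolding f_lx_def by (simp add: algebra_simps)

lemma fin_integrable:
  assumes "finite (set_pmf P)"
  shows "integrable (measure_pmf P) (g :: real \<Rightarrow> real)"
  by (rule integrable_measure_pmf_finite[OF assms])

theorem proposition4:
  fixes c :: nat and P :: "real pmf"
  assumes "c \<ge> 1" and "odd c"
    and "finite_bias_dist P"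
    and "indistinguishable c P"
  shows "indistinguishable (c + 1) P"
proof -
  define e where "e l x = measure_pmf.expectation P (f_lx l x)" for l x
  have fin: "finite (set_pmf P)" and sub: "set_pmf P \<subseteq> {0<..<1}"
    and sy: "\<And>a. pmf P a = pmf P (1 - a)"
    using assms(3) unfolding finite_bias_dist_def by auto
  have Pmap: "map_pmf (\<lambda>a. 1 - a) P = P"
  proof (rule pmf_eqI)
    fix a :: real
    have inj: "inj (\<lambda>a::real. 1 - a)" by (auto intro: injI)
    have "pmf (map_pmf (\<lambda>a. 1 - a) P) a = pmf (map_pmf (\<lambda>a. 1 - a) P) ((\<lambda>a. 1 - a) (1 - a))"
      by simp
    also have "\<dots> = pmf P (1 - a)" by (rule pmf_map_inj'[OF inj])
    finally show "pmf (map_pmf (\<lambda>a. 1 - a) P) a = pmf P a" using sy by simp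
  qed
  have A: "e l x = - e l (l - x)" if "x \<le> l" for l x
  proof -
    have "e l x = measure_pmf.expectation (map_pmf (\<lambda>a. 1 - a) P) (f_lx l x)"
      unfolding e_def Pmap ..
    also have "\<dots> = measure_pmf.expectation P (\<lambda>p. - f_lx l (l - x) p)"
      using f_sym[OF that] by simp
    also have "\<dots> = - e l (l - x)" unfolding e_def by simp
    finally show ?thesis .
  qed
  have B: "e l x = e (l+1) x + e (l+1) (x+1)" if "x \<le> l" for l x
  proof -
    have "e l x = measure_pmf.expectation P (\<lambda>p. f_lx (l+1) x p + f_lx (l+1) (x+1) p)"
      unfolding e_def
    proof (rule integral_cong_AE)
      show "AE p in measure_pmf P. f_lx l x p = f_lx (l + 1) x p + f_lx (l + 1) (x + 1) p"
        unfolding AE_measure_pmf_iff using sub f_rec[OF _ _ that] by auto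
    qed auto
    also have "\<dots> = e (l+1) x + e (l+1) (x+1)"
      unfolding e_def by (rule Bochner_Integration.integral_add; rule fin_integrable[OF fin])
    finally show ?thesis .
  qed
  have hyp: "e c x = 0" if "1 \<le> x" "x \<le> c - 1" for x
  proof -
    have le: "e c y \<le> 0" if "1 \<le> y" "y \<le> c - 1" for y
    proof -
      have c2: "2 \<le> c" using that by linarith
      have S: "(\<Sum>x=1..c-1. real (c choose x) * R_lx P c x) = 0"
        using assms(4) c2 unfolding indistinguishable_def by auto
      have "\<forall>x\<in>{1..c-1}. real (c choose x) * R_lx P c x = 0"
        using iffD1[OF sum_nonneg_eq_0_iff S] by (auto simp: R_lx_def)
      then have "real (c choose y) * R_lx P c y = 0" using that by auto
      moreover have "c choose y > 0" using that by simp
      ultimately have "R_lx P c y = 0" by simp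
      then show ?thesis unfolding R_lx_def e_def by simp
    qed
    have "e c x \<le> 0" using le[OF that] .
    moreover have "e c (c - x) \<le> 0" using that by (intro le) auto
    moreover have "e c x = - e c (c - x)" using that by (intro A) auto
    ultimately show ?thesis by linarith
  qed
  define d where "d k = e (c+1) (k+1)" for k
  have D1: "d (k+1) = - d k" if "k + 1 \<le> c - 1" for k
  proof -
    have "e c (k+1) = d k + d (k+1)" unfolding d_def using B[of "k+1" c] that by simp
    moreover have "e c (k+1) = 0" using hyp that by simp
    ultimately show ?thesis by simp
  qed
  have D2: "d (c - 1) = - d 0"
  proof -
    have "e (c+1) 1 = - e (c+1) (c+1-1)" using A[of 1 "c+1"] by simp
    then show ?thesis unfolding d_def using assms(1) by simp
  qed
  have D3: "d k = (-1)^k * d 0" if "k \<le> c - 1" for k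
    using that
  proof (induction k)
    case 0 then show ?case by simp
  next
    case (Suc k) then show ?case using D1[of k] by simp
  qed
  have "d (c - 1) = d 0" using D3[of "c-1"] assms(1,2) by simp
  then have d0: "d 0 = 0" using D2 by simp
  have dz: "d k = 0" if "k \<le> c - 1" for k using D3[OF that] d0 by simp
  show ?thesis
    unfolding indistinguishable_def
  proof (intro allI impI)
    fix l assume l: "2 \<le> l \<and> l \<le> c + 1"
    show "(\<Sum>x=1..l-1. real (l choose x) * R_lx P l x) = 0"
    proof (cases "l \<le> c")
      case True then show ?thesis using assms(4) l unfolding indistinguishable_def by auto
    next
      case False
      then have lc: "l = c + 1" using l by simp
      have "R_lx P l x = 0" if "x \<in> {1..l-1}" for x
      proof -
        have "e l x = d (x - 1)" unfolding d_def lc using that by simp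
        then have "e l x = 0" using dz that lc by auto
        then show ?thesis unfolding R_lx_def e_def by simp
      qed
      then show ?thesis by simp
    qed
  qed
qed

end
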